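(* Let $0<q<1/2$, $p=1-q$, $\lambda=q/p$. For each integer $z\ge2$ let $\kappa(z)$ be the unique $\kappa\in(0,+\infty)$ satisfying $$\sum_{j=1}^{z-1}\left(\prod_{i=1}^{j}\left(1-\frac iz\right)\right)\frac{1}{\kappa^j}=\frac{\lambda}{1-\lambda}.$$ Then as $z\to+\infty$, $$\kappa(z)=\frac pq-\frac{p^2}{q(p-q)}\,\frac1z+o(z^{-1}).$$
   Context: The left-hand side is strictly decreasing in $\kappa$ from $+\infty$ to $0$, so $\kappa(z)$ is well defined. *)

theory Defs
  imports "HOL-Analysis.Analysis" "HOL-Library.Landau_Symbols"
begin

definition kappa_lhs :: "nat \<Rightarrow> real \<Rightarrow> real" where
  "kappa_lhs z k = (\<Sum>j=1..z-1. (\<Prod>i=1..j. 1 - real i / real z) * (1 / k ^ j))"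

definition kappa :: "real \<Rightarrow> nat \<Rightarrow> real" where
  "kappa lam z = (THE k. k > 0 \<and> kappa_lhs z k = lam / (1 - lam))"

end

theory Submission
  imports Defs
begin


lemma summable_npow:
  fixes x :: real
  assumes "\<bar>x\<bar> < 1"
  shows "summable (\<lambda>n. real n ^ m * x ^ n)"
  using assms
proof (induction m arbitrary: x)
  case 0
  then show ?case by (simp add: summable_geometric)
next
  case (Suc m)
  have "summable (\<lambda>n. diffs (\<lambda>n. real n ^ m) n * \<bar>x\<bar> ^ n)"
    by (rule termdiff_converges[where K=1]) (use Suc in auto)
  then have sm: "summable (\<lambda>n. real (Suc n) ^ Suc m * \<bar>x\<bar> ^ n)"
    by (simp add: diffs_def)
  show ?case
  proof (rule summable_comparison_test'[OF sm])
    fix n :: nat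
    have "real n ^ Suc m \<le> real (Suc n) ^ Suc m"
      by (rule power_mono) auto
    then show "norm (real n ^ Suc m * x ^ n) \<le> real (Suc n) ^ Suc m * \<bar>x\<bar> ^ n"
      by (simp add: abs_mult power_abs mult_right_mono del: of_nat_Suc)
  qed
qed

lemma sums_geo0:
  fixes x :: real assumes "0 \<le> x" "x < 1"
  shows "(\<lambda>n. x ^ n) sums (1 / (1 - x))"
  using geometric_sums[of x] assms by simp

lemma sums_B:
  fixes x :: real assumes "0 \<le> x" "x < 1"
  shows "(\<lambda>n. (real n + 1) * x ^ n) sums (1 / (1 - x)^2)"
proof -
  have s1: "summable (\<lambda>n. real n ^ 1 * x ^ n)" using summable_npow[of x 1] assms by simp
  have s0: "summable (\<lambda>n. real n ^ 0 * x ^ n)" using summable_npow[of x 0] assms by simp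
  have sb: "summable (\<lambda>n. (real n + 1) * x ^ n)"
    using summable_add[OF s1 s0] by (simp add: algebra_simps)
  define B where "B = (\<Sum>n. (real n + 1) * x ^ n)"
  have b: "(\<lambda>n. (real n + 1) * x ^ n) sums B" using sb B_def summable_sums by blast
  have b1: "(\<lambda>n. (real (Suc n) + 1) * x ^ Suc n) sums (B - 1)"
    using b sums_Suc_iff[of "\<lambda>n. (real n + 1) * x ^ n" "B - 1"] by simp
  have b2: "(\<lambda>n. x * ((real n + 1) * x ^ n)) sums (x * B)" using sums_mult[OF b] by simp
  have "(\<lambda>n. (real (Suc n) + 1) * x ^ Suc n - x * ((real n + 1) * x ^ n)) sums (B - 1 - x * B)"
    using sums_diff[OF b1 b2] .
  moreover have "(\<lambda>n. (real (Suc n) + 1) * x ^ Suc n - x * ((real n + 1) * x ^ n)) = (\<lambda>n. x * x ^ n)"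
    by (auto simp: algebra_simps)
  ultimately have "(\<lambda>n. x * x ^ n) sums (B - 1 - x * B)" by simp
  moreover have "(\<lambda>n. x * x ^ n) sums (x * (1 / (1 - x)))" using sums_mult[OF sums_geo0[OF assms]] .
  ultimately have "B - 1 - x * B = x * (1 / (1 - x))" using sums_unique2 by blast
  then have e1: "B * (1 - x) = 1 + x * (1 / (1 - x))" by (simp add: algebra_simps)
  have "1 + x * (1 / (1 - x)) = 1 / (1 - x)" using assms by (simp add: field_simps)
  with e1 have "B * (1 - x) = 1 / (1 - x)" by simp
  then have "B = 1 / (1 - x) / (1 - x)" using assms by (simp add: eq_divide_eq)
  then have "B = 1 / (1 - x)^2" by (simp add: power2_eq_square)
  then show ?thesis using b by simp
qed

lemma sums_H:
  fixes x :: real assumes "0 \<le> x" "x < 1"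
  shows "(\<lambda>n. real n * (real n + 1) * x ^ n) sums (2 * x / (1 - x)^3)"
proof -
  have s1: "summable (\<lambda>n. real n ^ 1 * x ^ n)" using summable_npow[of x 1] assms by simp
  have s2: "summable (\<lambda>n. real n ^ 2 * x ^ n)" using summable_npow[of x 2] assms by simp
  have sb: "summable (\<lambda>n. real n * (real n + 1) * x ^ n)"
    using summable_add[OF s2 s1] by (simp add: algebra_simps power2_eq_square)
  define H where "H = (\<Sum>n. real n * (real n + 1) * x ^ n)"
  have b: "(\<lambda>n. real n * (real n + 1) * x ^ n) sums H" using sb H_def summable_sums by blast
  have b1: "(\<lambda>n. real (Suc n) * (real (Suc n) + 1) * x ^ Suc n) sums H"
    using b sums_Suc_iff[of "\<lambda>n. real n * (real n + 1) * x ^ n" "H"] by simp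
  have b2: "(\<lambda>n. x * (real n * (real n + 1) * x ^ n)) sums (x * H)" using sums_mult[OF b] by simp
  have "(\<lambda>n. real (Suc n) * (real (Suc n) + 1) * x ^ Suc n - x * (real n * (real n + 1) * x ^ n)) sums (H - x * H)"
    using sums_diff[OF b1 b2] .
  moreover have "(\<lambda>n. real (Suc n) * (real (Suc n) + 1) * x ^ Suc n - x * (real n * (real n + 1) * x ^ n)) = (\<lambda>n. (2 * x) * ((real n + 1) * x ^ n))"
    by (auto simp: algebra_simps)
  ultimately have "(\<lambda>n. (2 * x) * ((real n + 1) * x ^ n)) sums (H - x * H)" by simp
  moreover have "(\<lambda>n. (2 * x) * ((real n + 1) * x ^ n)) sums ((2 * x) * (1 / (1 - x)^2))"
    using sums_mult[OF sums_B[OF assms]] .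
  ultimately have "H - x * H = (2 * x) * (1 / (1 - x)^2)" using sums_unique2 by blast
  then have "H * (1 - x) = (2 * x) * (1 / (1 - x)^2)" by (simp add: algebra_simps)
  then have "H * (1 - x) * (1 - x)^2 = 2 * x" using assms by (simp add: field_simps)
  then have "H * (1 - x)^3 = 2 * x" by (simp add: power2_eq_square power3_eq_cube mult.assoc)
  then have "H = 2 * x / (1 - x)^3" using assms by (simp add: eq_divide_eq)
  then show ?thesis using b by simp
qed

lemma summable_Q:
  fixes x :: real assumes "0 \<le> x" "x < 1"
  shows "summable (\<lambda>n. (real n * (real n + 1))^2 * x ^ n)"
proof (rule summable_comparison_test'[where N=0])
  show "summable (\<lambda>n. 4 * (real n ^ 4 * x ^ n))"
    using summable_npow[of x 4] assms by (intro summable_mult) simp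
  fix n :: nat
  have "real n * (real n + 1) \<le> 2 * real n ^ 2" by (cases n) (auto simp: power2_eq_square)
  then have "(real n * (real n + 1))^2 \<le> (2 * real n ^ 2)^2" by (intro power_mono) auto
  then have "(real n * (real n + 1))^2 \<le> 4 * real n ^ 4" by (simp add: power_mult_distrib power2_eq_square power4_eq_xxxx)
  then have "(real n * (real n + 1))^2 * x ^ n \<le> (4 * real n ^ 4) * x ^ n"
    using assms by (intro mult_right_mono) auto
  then show "norm ((real n * (real n + 1))^2 * x ^ n) \<le> 4 * (real n ^ 4 * x ^ n)"
    using assms by (simp add: mult.assoc)
qed



definition aa :: "nat \<Rightarrow> nat \<Rightarrow> real" where
  "aa z j = (\<Prod>i=1..j. 1 - real i / real z)"

definition ss :: "nat \<Rightarrow> nat \<Rightarrow> real" where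
  "ss z j = real j * (real j + 1) / (2 * real z)"

lemma aa_Suc: "aa z (Suc j) = aa z j * (1 - real (Suc j) / real z)"
  unfolding aa_def by (simp add: prod.cl_ivl_Suc)

lemma aa_zero: assumes "1 \<le> z" "z \<le> j" shows "aa z j = 0"
  unfolding aa_def using assms by (intro prod_zero) (auto intro!: bexI[of _ z])

lemma aa_bounds_le:
  assumes "1 \<le> z" "j \<le> z"
  shows "0 \<le> aa z j \<and> 1 - ss z j \<le> aa z j \<and> aa z j \<le> 1 - ss z j + (ss z j)^2 / 2"
  using assms(2)
proof (induction j)
  case 0
  then show ?case by (simp add: aa_def ss_def)
next
  case (Suc j)
  define t where "t = real (Suc j) / real z"
  define s where "s = ss z j"
  have t01: "0 \<le> t" "t \<le> 1" using Suc.prems assms by (auto simp: t_def field_simps)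
  have s0: "0 \<le> s" by (simp add: s_def ss_def)
  have ssuc: "ss z (Suc j) = s + t" using assms
    by (simp add: s_def t_def ss_def field_simps)
  have IH: "0 \<le> aa z j" "1 - s \<le> aa z j" "aa z j \<le> 1 - s + s^2/2"
    using Suc s_def by auto
  have a: "aa z (Suc j) = aa z j * (1 - t)" by (simp add: aa_Suc t_def)
  have "0 \<le> aa z j * (1 - t)" using IH t01 by simp
  moreover have "(1 - s) * (1 - t) \<le> aa z j * (1 - t)" using IH t01 by (intro mult_right_mono) auto
  moreover have "1 - (s + t) \<le> (1 - s) * (1 - t)" using s0 t01 by (simp add: algebra_simps)
  moreover have "aa z j * (1 - t) \<le> (1 - s + s^2/2) * (1 - t)" using IH t01 by (intro mult_right_mono) auto
  moreover have "(1 - s + s^2/2) * (1 - t) \<le> 1 - (s + t) + (s + t)^2 / 2"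
  proof -
    have "1 - (s + t) + (s + t)^2 / 2 - (1 - s + s^2/2) * (1 - t) = t^2/2 + s^2 * t / 2"
      by (simp add: power2_eq_square algebra_simps add_divide_distrib diff_divide_distrib)
    moreover have "0 \<le> t^2/2 + s^2 * t / 2" using t01 by simp
    ultimately show ?thesis by linarith
  qed
  ultimately show ?case unfolding a ssuc by linarith
qed

lemma aa_bounds:
  assumes "1 \<le> z"
  shows "1 - ss z j \<le> aa z j \<and> aa z j \<le> 1 - ss z j + (ss z j)^2 / 2"
proof (cases "j \<le> z")
  case True then show ?thesis using aa_bounds_le[OF assms] by blast
next
  case False
  then have a: "aa z j = 0" using aa_zero assms by simp
  have "real z * (real z + 1) \<le> real j * (real j + 1)" using False
    by (intro mult_mono) auto
  moreover have "real z \<le> real z * real z" using assms by simp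
  moreover have "real z * (real z + 1) = real z * real z + real z" by (simp add: algebra_simps)
  ultimately have "2 * real z \<le> real j * (real j + 1)" by linarith
  then have "1 \<le> ss z j" using assms unfolding ss_def
    by (subst le_divide_eq_1_pos) auto
  moreover have "0 \<le> 1 - ss z j + (ss z j)^2 / 2"
  proof -
    have "1 - ss z j + (ss z j)^2 / 2 = ((ss z j - 1)^2 + 1) / 2" by (simp add: algebra_simps power2_eq_square)
    moreover have "0 \<le> ((ss z j - 1)^2 + 1) / 2" by simp
    ultimately show ?thesis by linarith
  qed
  ultimately show ?thesis using a by simp
qed

lemma lhs_sums:
  assumes "1 \<le> z" "k > 0"
  shows "(\<lambda>j. aa z j * (1 / k) ^ j) sums (kappa_lhs z k + 1)"
proof -
  have "(\<lambda>j. aa z j * (1 / k) ^ j) sums (\<Sum>j\<in>{0..z-1}. aa z j * (1 / k) ^ j)"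
    by (rule sums_finite) (use assms aa_zero in auto)
  moreover have "(\<Sum>j\<in>{0..z-1}. aa z j * (1 / k) ^ j) = aa z 0 * (1/k)^0 + (\<Sum>j\<in>{1..z-1}. aa z j * (1 / k) ^ j)"
    by (subst sum.atLeast_Suc_atMost) auto
  moreover have "kappa_lhs z k = (\<Sum>j\<in>{1..z-1}. aa z j * (1 / k) ^ j)"
    unfolding kappa_lhs_def aa_def by (simp add: power_one_over)
  moreover have "aa z 0 = 1" by (simp add: aa_def)
  ultimately show ?thesis by (simp add: add.commute)
qed

lemma lhs_lower:
  assumes "1 \<le> z" "x > 0" "x < 1"
  shows "x / (1 - x) - x / (real z * (1 - x)^3) \<le> kappa_lhs z (1 / x)"
proof -
  have s: "(\<lambda>j. aa z j * x ^ j) sums (kappa_lhs z (1/x) + 1)"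
    using lhs_sums[OF assms(1), of "1/x"] assms by simp
  have h: "(\<lambda>j. x ^ j - (1 / (2 * real z)) * (real j * (real j + 1) * x ^ j)) sums
      (1 / (1 - x) - (1 / (2 * real z)) * (2 * x / (1 - x)^3))"
  proof -
    have g: "(\<lambda>n. x ^ n) sums (1 / (1 - x))" using sums_geo0 assms by simp
    have hh: "(\<lambda>n. real n * (real n + 1) * x ^ n) sums (2 * x / (1 - x)^3)" using sums_H assms by simp
    show ?thesis using sums_diff[OF g sums_mult[OF hh]] .
  qed
  have "1 / (1 - x) - (1 / (2 * real z)) * (2 * x / (1 - x)^3) \<le> kappa_lhs z (1/x) + 1"
  proof (rule sums_le[OF _ h s])
    fix j
    have "x ^ j - (1 / (2 * real z)) * (real j * (real j + 1) * x ^ j) = (1 - ss z j) * x ^ j"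
      by (simp add: ss_def algebra_simps add_divide_distrib)
    also have "\<dots> \<le> aa z j * x ^ j" using aa_bounds[OF assms(1), of j] assms
      by (intro mult_right_mono) auto
    finally show "x ^ j - (1 / (2 * real z)) * (real j * (real j + 1) * x ^ j) \<le> aa z j * x ^ j" .
  qed
  moreover have "1 / (1 - x) = x / (1 - x) + 1" using assms by (simp add: field_simps)
  moreover have "(1 / (2 * real z)) * (2 * x / (1 - x)^3) = x / (real z * (1 - x)^3)" by simp
  ultimately show ?thesis by linarith
qed

definition QQ :: "real \<Rightarrow> real" where
  "QQ x = (\<Sum>n. (real n * (real n + 1))^2 * x ^ n)"

lemma lhs_upper:
  assumes "1 \<le> z" "x > 0" "x \<le> x1" "x1 < 1"
  shows "kappa_lhs z (1 / x) \<le> x / (1 - x) - x / (real z * (1 - x)^3) + QQ x1 / (8 * real z ^ 2)"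
proof -
  have x1: "x < 1" using assms by simp
  have s: "(\<lambda>j. aa z j * x ^ j) sums (kappa_lhs z (1/x) + 1)"
    using lhs_sums[OF assms(1), of "1/x"] assms by simp
  have q: "(\<lambda>n. (real n * (real n + 1))^2 * x1 ^ n) sums QQ x1"
    unfolding QQ_def using summable_Q[of x1] assms by (intro summable_sums) simp
  have h: "(\<lambda>j. x ^ j - (1 / (2 * real z)) * (real j * (real j + 1) * x ^ j)
          + (1 / (8 * real z ^ 2)) * ((real j * (real j + 1))^2 * x1 ^ j)) sums
      (1 / (1 - x) - (1 / (2 * real z)) * (2 * x / (1 - x)^3) + (1 / (8 * real z ^ 2)) * QQ x1)"
  proof -
    have g: "(\<lambda>n. x ^ n) sums (1 / (1 - x))" using sums_geo0 assms x1 by simp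
    have hh: "(\<lambda>n. real n * (real n + 1) * x ^ n) sums (2 * x / (1 - x)^3)" using sums_H assms x1 by simp
    show ?thesis using sums_add[OF sums_diff[OF g sums_mult[OF hh]] sums_mult[OF q]] .
  qed
  have "kappa_lhs z (1/x) + 1 \<le> 1 / (1 - x) - (1 / (2 * real z)) * (2 * x / (1 - x)^3) + (1 / (8 * real z ^ 2)) * QQ x1"
  proof (rule sums_le[OF _ s h])
    fix j
    have "aa z j * x ^ j \<le> (1 - ss z j + (ss z j)^2 / 2) * x ^ j" using aa_bounds[OF assms(1), of j] assms
      by (intro mult_right_mono) auto
    also have "\<dots> = x ^ j - (1 / (2 * real z)) * (real j * (real j + 1) * x ^ j)
          + (1 / (8 * real z ^ 2)) * ((real j * (real j + 1))^2 * x ^ j)"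
      by (simp add: ss_def algebra_simps add_divide_distrib power2_eq_square)
    also have "\<dots> \<le> x ^ j - (1 / (2 * real z)) * (real j * (real j + 1) * x ^ j)
          + (1 / (8 * real z ^ 2)) * ((real j * (real j + 1))^2 * x1 ^ j)"
      using assms by (intro add_left_mono mult_left_mono power_mono) auto
    finally show "aa z j * x ^ j \<le> x ^ j - (1 / (2 * real z)) * (real j * (real j + 1) * x ^ j)
          + (1 / (8 * real z ^ 2)) * ((real j * (real j + 1))^2 * x1 ^ j)" .
  qed
  moreover have "1 / (1 - x) = x / (1 - x) + 1" using x1 by (simp add: field_simps)
  moreover have "(1 / (2 * real z)) * (2 * x / (1 - x)^3) = x / (real z * (1 - x)^3)" by simp
  moreover have "(1 / (8 * real z ^ 2)) * QQ x1 = QQ x1 / (8 * real z ^ 2)" by simp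
  ultimately show ?thesis by linarith
qed



lemma lower_k:
  assumes "1 \<le> z" "k > 1"
  shows "1 / (k - 1) - k^2 / (real z * (k - 1)^3) \<le> kappa_lhs z k"
proof -
  define x where "x = 1 / k"
  have x: "x > 0" "x < 1" using assms by (auto simp: x_def)
  have k: "k = 1 / x" using assms by (simp add: x_def)
  have e1: "x / (1 - x) = 1 / (k - 1)" using assms unfolding x_def by (simp add: field_simps)
  have e2: "x / (real z * (1 - x)^3) = k^2 / (real z * (k - 1)^3)" using assms unfolding x_def
    by (simp add: field_simps power3_eq_cube power2_eq_square)
  show ?thesis using lhs_lower[OF assms(1) x] e1 e2 k by simp
qed

lemma upper_k:
  assumes "1 \<le> z" "k > 1" "1 / k \<le> x1" "x1 < 1"
  shows "kappa_lhs z k \<le> 1 / (k - 1) - k^2 / (real z * (k - 1)^3) + QQ x1 / (8 * real z ^ 2)"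
proof -
  define x where "x = 1 / k"
  have x: "x > 0" "x \<le> x1" using assms by (auto simp: x_def)
  have k: "k = 1 / x" using assms by (simp add: x_def)
  have e1: "x / (1 - x) = 1 / (k - 1)" using assms unfolding x_def by (simp add: field_simps)
  have e2: "x / (real z * (1 - x)^3) = k^2 / (real z * (k - 1)^3)" using assms unfolding x_def
    by (simp add: field_simps power3_eq_cube power2_eq_square)
  show ?thesis using lhs_upper[OF assms(1) x assms(4)] e1 e2 k by simp
qed

lemma lhs_strict:
  assumes "2 \<le> z" "0 < k1" "k1 < k2"
  shows "kappa_lhs z k2 < kappa_lhs z k1"
  unfolding kappa_lhs_def
proof (rule sum_strict_mono_ex1)
  have le: "(\<Prod>i=1..j. 1 - real i / real z) * (1 / k2 ^ j) \<le> (\<Prod>i=1..j. 1 - real i / real z) * (1 / k1 ^ j)"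
    if "j \<in> {1..z-1}" for j
  proof (rule mult_left_mono)
    show "1 / k2 ^ j \<le> 1 / k1 ^ j" using assms
      by (intro divide_left_mono power_mono mult_pos_pos) auto
    show "0 \<le> (\<Prod>i=1..j. 1 - real i / real z)"
      using that assms by (intro prod_nonneg) (auto simp: field_simps)
  qed
  then show "\<forall>j\<in>{1..z-1}. (\<Prod>i=1..j. 1 - real i / real z) * (1 / k2 ^ j) \<le> (\<Prod>i=1..j. 1 - real i / real z) * (1 / k1 ^ j)"
    by blast
  have "(1 - 1 / real z) * (1 / k2) < (1 - 1 / real z) * (1 / k1)"
    using assms by (intro mult_strict_left_mono) (auto simp: field_simps)
  then show "\<exists>j\<in>{1..z-1}. (\<Prod>i=1..j. 1 - real i / real z) * (1 / k2 ^ j) < (\<Prod>i=1..j. 1 - real i / real z) * (1 / k1 ^ j)"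
    using assms by (intro bexI[of _ 1]) auto
qed simp

lemma lhs_cont:
  assumes "0 < a"
  shows "continuous_on {a..b} (kappa_lhs z)"
  unfolding kappa_lhs_def using assms by (intro continuous_intros) auto

lemma kappa_eqI:
  assumes "2 \<le> z" "k > 0" "kappa_lhs z k = lam / (1 - lam)"
  shows "kappa lam z = k"
  unfolding kappa_def
proof (rule the_equality)
  show "k > 0 \<and> kappa_lhs z k = lam / (1 - lam)" using assms by simp
  fix k' assume h: "k' > 0 \<and> kappa_lhs z k' = lam / (1 - lam)"
  show "k' = k"
  proof (rule ccontr)
    assume "k' \<noteq> k"
    then consider "k' < k" | "k < k'" by linarith
    then show False
      using lhs_strict[OF assms(1)] h assms by cases fastforce+
  qed
qed



theorem mainTheorem13:
  fixes q p lam :: real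
  assumes "0 < q" and "q < 1/2" and "p = 1 - q" and "lam = q / p"
  shows "(\<lambda>z::nat. kappa lam z - (p / q - p^2 / (q * (p - q)) * (1 / real z)))
           \<in> o[sequentially](\<lambda>z. 1 / real z)"
proof (rule landau_o.smallI)
  fix eps :: real assume eps: "eps > 0"
  have pq: "q < p" "0 < p" using assms by auto
  define A where "A = (p - q) / q"
  define r where "r = p / q"
  define C where "C = p^2 / (q * (p - q))"
  define c where "c = lam / (1 - lam)"
  have A0: "A > 0" using pq assms by (simp add: A_def)
  have rA: "r - 1 = A" using assms by (simp add: r_def A_def field_simps)
  have l1: "1 - lam = (p - q) / p" using assms pq by (simp add: field_simps)
  have cA: "c = 1 / A" using assms pq unfolding c_def A_def l1 by (simp add: field_simps)
  have CA: "C = r^2 / A" using assms pq unfolding C_def A_def r_def by (simp add: field_simps power2_eq_square)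
  have r1: "r > 1" using rA A0 by simp
  define x1 where "x1 = (1 / r + 1) / 2"
  have x1: "1 / r < x1" "x1 < 1" using r1 by (auto simp: x1_def field_simps)
  define Q where "Q = QQ x1"
  define Phi where "Phi = (\<lambda>D u. D / (A * (A - D * u)) - (r - D * u)^2 / (A - D * u)^3)"
  define u where "u = (\<lambda>z::nat. 1 / real z)"
  have u0: "u \<longlonglongrightarrow> 0" unfolding u_def by (rule lim_inverse_n')
  have Phi_lim: "((\<lambda>z. Phi D (u z)) \<longlongrightarrow> (D - C) / A^2) sequentially" for D
  proof -
    have "((\<lambda>z. Phi D (u z)) \<longlongrightarrow> Phi D 0) sequentially"
      unfolding Phi_def using A0 by (intro tendsto_intros u0) auto
    moreover have "Phi D 0 = (D - C) / A^2" unfolding Phi_def CA using A0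
      by (simp add: field_simps power2_eq_square power3_eq_cube)
    ultimately show ?thesis by simp
  qed
  define D1 where "D1 = C + eps"
  define D2 where "D2 = C - eps"
  have ev1: "eventually (\<lambda>z. 0 < Phi D1 (u z)) sequentially"
    using order_tendstoD(1)[OF Phi_lim[of D1]] eps A0 by (simp add: D1_def)
  have ev2: "eventually (\<lambda>z. Phi D2 (u z) + Q / 8 * u z < 0) sequentially"
  proof -
    have "((\<lambda>z. Phi D2 (u z) + Q / 8 * u z) \<longlongrightarrow> (D2 - C) / A^2 + Q / 8 * 0) sequentially"
      by (intro tendsto_intros Phi_lim u0)
    moreover have "(D2 - C) / A^2 + Q / 8 * 0 < 0" using eps A0 by (simp add: D2_def)
    ultimately show ?thesis using order_tendstoD(2) by blast
  qed
  have evw: "eventually (\<lambda>z. 0 < A - D * u z) sequentially" for D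
  proof -
    have "((\<lambda>z. A - D * u z) \<longlongrightarrow> A - D * 0) sequentially" by (intro tendsto_intros u0)
    then show ?thesis using A0 order_tendstoD(1) by fastforce
  qed
  have evx: "eventually (\<lambda>z. 1 / (r - D2 * u z) < x1) sequentially"
  proof -
    have "((\<lambda>z. 1 / (r - D2 * u z)) \<longlongrightarrow> 1 / (r - D2 * 0)) sequentially"
      using r1 by (intro tendsto_intros u0) auto
    then show ?thesis using x1 order_tendstoD(2) by fastforce
  qed
  have evz: "eventually (\<lambda>z::nat. 2 \<le> z) sequentially" by (rule eventually_ge_at_top)
  show "eventually (\<lambda>z. norm (kappa lam z - (p / q - p^2 / (q * (p - q)) * (1 / real z)))
          \<le> eps * norm (1 / real z)) sequentially"
    using ev1 ev2 evw[of D1] evw[of D2] evx evz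
  proof eventually_elim
    case (elim z)
    define v where "v = u z"
    have z1: "1 \<le> z" using elim by simp
    have v0: "v > 0" using elim by (simp add: v_def u_def)
    have vz: "v = 1 / real z" by (simp add: v_def u_def)
    define k1 where "k1 = r - D1 * v"
    define k2 where "k2 = r - D2 * v"
    have w1: "k1 - 1 = A - D1 * v" "A - D1 * v > 0" using rA elim by (auto simp: k1_def v_def)
    have w2: "k2 - 1 = A - D2 * v" "A - D2 * v > 0" using rA elim by (auto simp: k2_def v_def)
    have k12: "k1 \<le> k2" using eps v0 by (simp add: k1_def k2_def D1_def D2_def mult_right_mono)
    have iden: "1 / (k - 1) - k^2 / (real z * (k - 1)^3) - c = v * Phi D (v)"
      if "k = r - D * v" "A - D * v > 0" for k D
    proof -
      define w where "w = A - D * v"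
      have kw: "k - 1 = w" using that rA by (simp add: w_def)
      have w0: "w > 0" using that by (simp add: w_def)
      have e0: "1 / w - 1 / A = (A - w) / (A * w)" using w0 A0 by (simp add: field_simps)
      have e1: "1 / w - 1 / A = v * (D / (A * w))" unfolding e0 by (simp add: w_def)
      have e2: "k^2 / (real z * w^3) = v * (k^2 / w^3)" by (simp add: vz)
      have e3: "Phi D v = D / (A * w) - k^2 / w^3" unfolding Phi_def w_def using that(1) by simp
      show ?thesis unfolding kw cA e3 right_diff_distrib using e1 e2 by linarith
    qed
    have f1: "c < kappa_lhs z k1"
    proof -
      have "1 / (k1 - 1) - k1^2 / (real z * (k1 - 1)^3) - c = v * Phi D1 v"
        using iden[of k1 D1] w1 by (simp add: k1_def)
      moreover have "0 < v * Phi D1 v" using v0 elim by (simp add: v_def)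
      moreover have "1 / (k1 - 1) - k1^2 / (real z * (k1 - 1)^3) \<le> kappa_lhs z k1"
      proof -
        have "1 < k1" using w1 by simp
        then show ?thesis using lower_k[OF z1] by blast
      qed
      ultimately show ?thesis by linarith
    qed
    have f2: "kappa_lhs z k2 < c"
    proof -
      have "1 / (k2 - 1) - k2^2 / (real z * (k2 - 1)^3) - c = v * Phi D2 v"
        using iden[of k2 D2] w2 by (simp add: k2_def)
      moreover have "Q / (8 * real z ^ 2) = v * (Q / 8 * v)" by (simp add: vz power2_eq_square)
      moreover have "v * Phi D2 v + v * (Q / 8 * v) < 0"
      proof -
        have "v * (Phi D2 v + Q / 8 * v) < 0" using v0 elim by (simp add: v_def mult_pos_neg)
        then show ?thesis by (simp add: algebra_simps)
      qed
      moreover have "kappa_lhs z k2 \<le> 1 / (k2 - 1) - k2^2 / (real z * (k2 - 1)^3) + QQ x1 / (8 * real z ^ 2)"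
        using upper_k[OF z1 _ _ x1(2)] w2 elim by (simp add: k2_def v_def less_imp_le)
      ultimately show ?thesis unfolding Q_def by linarith
    qed
    have k1pos: "0 < k1" using w1 by simp
    obtain k where k: "k1 \<le> k" "k \<le> k2" "kappa_lhs z k = c"
      using IVT2'[of "kappa_lhs z" k2 c k1, OF _ _ k12 lhs_cont[OF k1pos]] f1 f2 by auto
    have kap: "kappa lam z = k"
      using kappa_eqI[of z k lam] k k1pos elim unfolding c_def by simp
    have "\<bar>k - (r - C * v)\<bar> \<le> eps * v"
      using k unfolding k1_def k2_def D1_def D2_def by (simp add: algebra_simps abs_le_iff)
    then show ?case unfolding kap using v0 by (simp add: vz r_def C_def)
  qed
qed


end
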